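(* Suppose the random walk $R$ is irreducible, aperiodic, positive recurrent and has negative drift. Let $\mu(n)=\mu_0+\sum_{i=1}^M\mu_i n_i$ with $\mu_0\ge1$ and $\mu_1,\dots,\mu_M\ge0$. Define $\mu^*=\max_{i=0,\dots,M}\mu_i$, $$v_i=\frac{-\mu^*}{\sup_{n\in S:\,i\in I(n)}\{s^+_i(n)-s^-_i(n)\}}\ (i=1,\dots,M),\qquad V(n)=\sum_{i=1}^M v_i n_i^2,$$ $$b=\mu_0+\sum_{i=1}^M v_i,\qquad B=\Big\{n\in S:\ n_i\le\frac{\mu_0+\sum_{l=1}^M v_l}{\mu^*}\ \ \forall i=1,\dots,M\Big\}.$$ Then $0\le v_i<\infty$, $V:S\to[0,\infty)$, $B$ is finite, and for all $n\in S$, $$\sum_{u\in N_{c(n)}}p_{c(n),u}V(n+u)-V(n)\le-\mu(n)+b\,\mathbf 1_B(n),$$ i.e. $R$ is $\mu$-ergodic.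
   Context: Let $M\ge 1$ and $S=\{0,1,2,\dots\}^M$. For $n\in S$ let $N(n)=\{u\in\{-1,0,1\}^M: n+u\in S\}$. A partition $C=\{C_k\}_{k\in K}$ ($K$ finite) of $S$ is a family of pairwise disjoint sets covering $S$ such that $N(n)=N(n')$ whenever $n,n'$ lie in the same $C_k$; write $N_k$ for this common set and $c(n)$ for the index $k$ with $n\in C_k$. The random walk $R$ is a discrete-time Markov chain on $S$ with transition probabilities $P(n,n+u)=p_{c(n),u}\ge0$ for $u\in N_{c(n)}$, $P(n,m)=0$ if $m-n\notin N_{c(n)}$, and $\sum_{u\in N_k}p_{k,u}=1$ for every $k$. For $n\in S$, $I(n)=\{i\in\{1,\dots,M\}: n_i>0\}$, $s^+_i(n)=\sum_{u\in N_{c(n)}:u_i=1}p_{c(n),u}$ and $s^-_i(n)=\sum_{u\in N_{c(n)}:u_i=-1}p_{c(n),u}$. $R$ has negative drift if $\sup_{n\in S,\,i\in I(n)}\{s^+_i(n)-s^-_i(n)\}<0$. *)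

theory Defs
  imports Complex_Main "HOL-Library.Function_Algebras" "HOL-Library.Indicator_Function"
begin

text \<open>Coordinates are indexed 0..M-1 (the paper uses 1..M). States are functions
  nat \<Rightarrow> int vanishing at indices \<ge> M, with nonnegative coordinates below M.\<close>

definition St :: "nat \<Rightarrow> (nat \<Rightarrow> int) set" where
  "St M = {n. (\<forall>i<M. 0 \<le> n i) \<and> (\<forall>i. M \<le> i \<longrightarrow> n i = 0)}"

definition Nb :: "nat \<Rightarrow> (nat \<Rightarrow> int) \<Rightarrow> (nat \<Rightarrow> int) set" where
  "Nb M n = {u. (\<forall>i<M. u i \<in> {-1,0,1}) \<and> (\<forall>i. M \<le> i \<longrightarrow> u i = 0) \<and> n + u \<in> St M}"

text \<open>Partition with finite index set K, given by the class map c, such that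
  N is constant on each class; p k u are the step probabilities of class k.\<close>
definition is_partition_rw ::
  "nat \<Rightarrow> 'k set \<Rightarrow> ((nat \<Rightarrow> int) \<Rightarrow> 'k) \<Rightarrow> ('k \<Rightarrow> (nat \<Rightarrow> int) \<Rightarrow> real) \<Rightarrow> bool" where
  "is_partition_rw M K c p \<longleftrightarrow>
     finite K \<and> c ` St M \<subseteq> K \<and>
     (\<forall>n\<in>St M. \<forall>n'\<in>St M. c n = c n' \<longrightarrow> Nb M n = Nb M n') \<and>
     (\<forall>n\<in>St M. (\<forall>u\<in>Nb M n. 0 \<le> p (c n) u) \<and> (\<Sum>u\<in>Nb M n. p (c n) u) = 1)"

definition trans_prob :: "nat \<Rightarrow> ((nat \<Rightarrow> int) \<Rightarrow> 'k) \<Rightarrow> ('k \<Rightarrow> (nat \<Rightarrow> int) \<Rightarrow> real)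
    \<Rightarrow> (nat \<Rightarrow> int) \<Rightarrow> (nat \<Rightarrow> int) \<Rightarrow> real" where
  "trans_prob M c p n m = (if m - n \<in> Nb M n then p (c n) (m - n) else 0)"

primrec nstep :: "nat \<Rightarrow> ((nat \<Rightarrow> int) \<Rightarrow> 'k) \<Rightarrow> ('k \<Rightarrow> (nat \<Rightarrow> int) \<Rightarrow> real)
    \<Rightarrow> nat \<Rightarrow> (nat \<Rightarrow> int) \<Rightarrow> (nat \<Rightarrow> int) \<Rightarrow> real" where
  "nstep M c p 0 n m = (if n = m then 1 else 0)"
| "nstep M c p (Suc k) n m = (\<Sum>u\<in>Nb M n. p (c n) u * nstep M c p k (n + u) m)"

primrec fpass :: "nat \<Rightarrow> ((nat \<Rightarrow> int) \<Rightarrow> 'k) \<Rightarrow> ('k \<Rightarrow> (nat \<Rightarrow> int) \<Rightarrow> real)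
    \<Rightarrow> nat \<Rightarrow> (nat \<Rightarrow> int) \<Rightarrow> (nat \<Rightarrow> int) \<Rightarrow> real" where
  "fpass M c p 0 n m = 0"
| "fpass M c p (Suc k) n m =
     (if k = 0 then trans_prob M c p n m
      else (\<Sum>u\<in>Nb M n. if n + u = m then 0 else p (c n) u * fpass M c p k (n + u) m))"

definition irreducible_rw where
  "irreducible_rw M c p \<longleftrightarrow> (\<forall>n\<in>St M. \<forall>m\<in>St M. \<exists>k. nstep M c p k n m > 0)"

definition aperiodic_rw where
  "aperiodic_rw M c p \<longleftrightarrow> (\<forall>n\<in>St M. Gcd {k. 0 < k \<and> nstep M c p k n n > 0} = 1)"

definition pos_recurrent_rw where
  "pos_recurrent_rw M c p \<longleftrightarrow>
     (\<forall>n\<in>St M. (\<lambda>k. fpass M c p k n n) sums 1 \<and> summable (\<lambda>k. real k * fpass M c p k n n))"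

definition Iset :: "nat \<Rightarrow> (nat \<Rightarrow> int) \<Rightarrow> nat set" where
  "Iset M n = {i. i < M \<and> 0 < n i}"

definition splus where
  "splus M c p i n = (\<Sum>u\<in>{u\<in>Nb M n. u i = 1}. p (c n) u)"

definition sminus where
  "sminus M c p i n = (\<Sum>u\<in>{u\<in>Nb M n. u i = -1}. p (c n) u)"

definition drift_i where
  "drift_i M c p i = Sup {splus M c p i n - sminus M c p i n | n. n \<in> St M \<and> i \<in> Iset M n}"

definition negative_drift where
  "negative_drift M c p \<longleftrightarrow>
     Sup {splus M c p i n - sminus M c p i n | n i. n \<in> St M \<and> i \<in> Iset M n} < 0"

end

theory Submission
  imports Defs "HOL-Library.FuncSet"
begin

lemma fin_supp:
  assumes "finite A"
  shows "finite {f::nat\<Rightarrow>int. (\<forall>i<M. f i \<in> A) \<and> (\<forall>i. M \<le> i \<longrightarrow> f i = 0)}"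
proof -
  have "{f::nat\<Rightarrow>int. (\<forall>i<M. f i \<in> A) \<and> (\<forall>i. M \<le> i \<longrightarrow> f i = 0)}
     \<subseteq> (\<lambda>g i. if i < M then g i else 0) ` (PiE {..<M} (\<lambda>_. A))"
  proof
    fix f :: "nat\<Rightarrow>int" assume f: "f \<in> {f. (\<forall>i<M. f i \<in> A) \<and> (\<forall>i. M \<le> i \<longrightarrow> f i = 0)}"
    have "f = (\<lambda>i. if i < M then restrict f {..<M} i else 0)"
      using f by (auto simp: fun_eq_iff)
    moreover have "restrict f {..<M} \<in> PiE {..<M} (\<lambda>_. A)" using f by auto
    ultimately show "f \<in> (\<lambda>g i. if i < M then g i else 0) ` (PiE {..<M} (\<lambda>_. A))" by blast
  qed
  moreover have "finite (PiE {..<M} (\<lambda>_. A))" using assms by (simp add: finite_PiE)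
  ultimately show ?thesis using finite_subset by blast
qed

lemma fin_Nb: "finite (Nb M n)"
proof -
  have "Nb M n \<subseteq> {f::nat\<Rightarrow>int. (\<forall>i<M. f i \<in> {-1,0,1}) \<and> (\<forall>i. M \<le> i \<longrightarrow> f i = 0)}"
    unfolding Nb_def by auto
  thus ?thesis using fin_supp[of "{-1,0,1}" M] finite_subset by blast
qed

lemma sum_ui:
  assumes "\<forall>u\<in>N. u i \<in> {-1,0,1::int}" "finite N"
  shows "(\<Sum>u\<in>N. P u * real_of_int (u i)) = (\<Sum>u\<in>{u\<in>N. u i = 1}. P u) - (\<Sum>u\<in>{u\<in>N. u i = -1}. P u)"
proof -
  have "(\<Sum>u\<in>N. P u * real_of_int (u i)) = (\<Sum>u\<in>N. (if u i = 1 then P u else 0) - (if u i = -1 then P u else 0))"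
    by (rule sum.cong) (use assms in auto)
  also have "\<dots> = (\<Sum>u\<in>N. (if u i = 1 then P u else 0)) - (\<Sum>u\<in>N. (if u i = -1 then P u else 0))"
    by (rule sum_subtractf)
  also have "\<dots> = (\<Sum>u\<in>{u\<in>N. u i = 1}. P u) - (\<Sum>u\<in>{u\<in>N. u i = -1}. P u)"
    using assms(2) by (simp add: sum.inter_filter)
  finally show ?thesis .
qed

theorem lemma4p3:
  fixes M :: nat and K :: "'k set" and c :: "(nat \<Rightarrow> int) \<Rightarrow> 'k"
    and p :: "'k \<Rightarrow> (nat \<Rightarrow> int) \<Rightarrow> real"
    and \<mu>0 :: real and \<mu> :: "nat \<Rightarrow> real"
    and \<mu>s :: real and v :: "nat \<Rightarrow> real" and V :: "(nat \<Rightarrow> int) \<Rightarrow> real"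
    and b :: real and B :: "(nat \<Rightarrow> int) set" and mu :: "(nat \<Rightarrow> int) \<Rightarrow> real"
  assumes "M \<ge> 1"
    and "is_partition_rw M K c p"
    and "irreducible_rw M c p" and "aperiodic_rw M c p" and "pos_recurrent_rw M c p"
    and "negative_drift M c p"
    and "\<mu>0 \<ge> 1" and "\<forall>i<M. \<mu> i \<ge> 0"
    and "mu = (\<lambda>n. \<mu>0 + (\<Sum>i<M. \<mu> i * real_of_int (n i)))"
    and "\<mu>s = Max (insert \<mu>0 (\<mu> ` {..<M}))"
    and "v = (\<lambda>i. - \<mu>s / drift_i M c p i)"
    and "V = (\<lambda>n. \<Sum>i<M. v i * (real_of_int (n i))\<^sup>2)"
    and "b = \<mu>0 + (\<Sum>i<M. v i)"
    and "B = {n \<in> St M. \<forall>i<M. real_of_int (n i) \<le> (\<mu>0 + (\<Sum>l<M. v l)) / \<mu>s}"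
  shows "(\<forall>i<M. 0 \<le> v i) \<and> (\<forall>n\<in>St M. 0 \<le> V n) \<and> finite B \<and>
    (\<forall>n\<in>St M. (\<Sum>u\<in>Nb M n. p (c n) u * V (n + u)) - V n \<le> - mu n + b * indicator B n)"
proof -
  note part = assms(2)[unfolded is_partition_rw_def]
  have psum: "\<And>n. n \<in> St M \<Longrightarrow> (\<Sum>u\<in>Nb M n. p (c n) u) = 1" using part by blast
  have pnn: "\<And>n u. n \<in> St M \<Longrightarrow> u \<in> Nb M n \<Longrightarrow> 0 \<le> p (c n) u" using part by blast
  have mus0: "\<mu>s \<ge> \<mu>0" unfolding assms(10) by (rule Max_ge) auto
  have musi: "\<And>i. i < M \<Longrightarrow> \<mu> i \<le> \<mu>s" unfolding assms(10) by (rule Max_ge) auto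
  have musp: "\<mu>s > 0" using mus0 assms(7) by linarith
  define SA where "SA = {splus M c p i n - sminus M c p i n | n i. n \<in> St M \<and> i \<in> Iset M n}"
  have splus_le: "splus M c p i n \<le> 1" if "n \<in> St M" for i n
  proof -
    have "splus M c p i n \<le> (\<Sum>u\<in>Nb M n. p (c n) u)"
      unfolding splus_def by (rule sum_mono2) (use fin_Nb pnn that in auto)
    thus ?thesis using psum that by simp
  qed
  have sminus_ge: "sminus M c p i n \<ge> 0" if "n \<in> St M" for i n
    unfolding sminus_def by (rule sum_nonneg) (use pnn that in auto)
  have bddSA: "bdd_above SA" unfolding SA_def bdd_above_def
  proof (intro exI[of _ 1] ballI)
    fix x assume "x \<in> {splus M c p i n - sminus M c p i n | n i. n \<in> St M \<and> i \<in> Iset M n}"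
    then obtain n i where "n \<in> St M" "x = splus M c p i n - sminus M c p i n" by blast
    thus "x \<le> 1" using splus_le[of n i] sminus_ge[of n i] by simp
  qed
  have dneg: "drift_i M c p i < 0" and dle: "\<And>n. n \<in> St M \<Longrightarrow> i \<in> Iset M n \<Longrightarrow>
      splus M c p i n - sminus M c p i n \<le> drift_i M c p i" if "i < M" for i
  proof -
    define D where "D = {splus M c p i n - sminus M c p i n | n. n \<in> St M \<and> i \<in> Iset M n}"
    have ne: "D \<noteq> {}" unfolding D_def
      using that by (intro ex_in_conv[THEN iffD1] exI[of _ "splus M c p i (\<lambda>j. if j = i then 1 else 0) - sminus M c p i (\<lambda>j. if j = i then 1 else 0)"])
        (auto simp: St_def Iset_def intro!: exI[of _ "\<lambda>j. if j = i then 1 else 0"])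
    have sub: "D \<subseteq> SA" unfolding D_def SA_def by blast
    have bddD: "bdd_above D" by (rule bdd_above_mono[OF bddSA sub])
    have "Sup D \<le> Sup SA" by (rule cSup_subset_mono[OF ne bddSA sub])
    moreover have "Sup SA < 0" using assms(6) unfolding negative_drift_def SA_def by simp
    ultimately show "drift_i M c p i < 0" unfolding drift_i_def D_def[symmetric] by simp
    show "\<And>n. n \<in> St M \<Longrightarrow> i \<in> Iset M n \<Longrightarrow>
      splus M c p i n - sminus M c p i n \<le> drift_i M c p i"
      unfolding drift_i_def D_def[symmetric] by (rule cSup_upper[OF _ bddD]) (auto simp: D_def)
  qed
  have vnn: "\<forall>i<M. 0 \<le> v i"
    using dneg musp unfolding assms(11) by (auto intro!: divide_pos_neg less_imp_le)
  have Vnn: "\<forall>n\<in>St M. 0 \<le> V n"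
    using vnn unfolding assms(12) by (auto intro!: sum_nonneg)
  have finB: "finite B"
  proof -
    define C where "C = (\<mu>0 + (\<Sum>l<M. v l)) / \<mu>s"
    have "B \<subseteq> {f::nat\<Rightarrow>int. (\<forall>i<M. f i \<in> {0..\<lceil>C\<rceil>}) \<and> (\<forall>i. M \<le> i \<longrightarrow> f i = 0)}"
    proof
      fix n assume "n \<in> B"
      hence "n \<in> St M" "\<forall>i<M. real_of_int (n i) \<le> C" unfolding assms(14) C_def by auto
      thus "n \<in> {f::nat\<Rightarrow>int. (\<forall>i<M. f i \<in> {0..\<lceil>C\<rceil>}) \<and> (\<forall>i. M \<le> i \<longrightarrow> f i = 0)}"
        unfolding St_def by (auto simp: le_ceiling_iff)
    qed
    thus ?thesis using fin_supp[of "{0..\<lceil>C\<rceil>}" M] finite_subset by blast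
  qed
  have drift: "(\<Sum>u\<in>Nb M n. p (c n) u * V (n + u)) - V n \<le> - mu n + b * indicator B n"
    if nS: "n \<in> St M" for n
  proof -
    let ?N = "Nb M n" and ?P = "p (c n)"
    define E where "E i = (\<Sum>u\<in>?N. ?P u * ((real_of_int (n i + u i))\<^sup>2 - (real_of_int (n i))\<^sup>2))" for i
    have "(\<Sum>u\<in>?N. ?P u * V (n + u)) - V n
        = (\<Sum>u\<in>?N. ?P u * V (n + u)) - (\<Sum>u\<in>?N. ?P u * V n)"
      using psum[OF nS] by (simp add: sum_distrib_right[symmetric])
    also have "\<dots> = (\<Sum>u\<in>?N. \<Sum>i<M. ?P u * v i * ((real_of_int (n i + u i))\<^sup>2 - (real_of_int (n i))\<^sup>2))"
      unfolding assms(12) sum_subtractf[symmetric]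
      by (rule sum.cong) (auto simp: sum_distrib_left algebra_simps sum_subtractf[symmetric])
    also have "\<dots> = (\<Sum>i<M. v i * E i)"
      unfolding E_def by (subst sum.swap) (auto simp: sum_distrib_left algebra_simps intro!: sum.cong)
    also have "\<dots> \<le> (\<Sum>i<M. v i - 2 * \<mu>s * real_of_int (n i))"
    proof (rule sum_mono)
      fix i assume "i \<in> {..<M}"
      hence iM: "i < M" by simp
      have uN: "\<forall>u\<in>?N. u i \<in> {-1,0,1}" using iM unfolding Nb_def by auto
      have Eeq: "E i = 2 * real_of_int (n i) * (\<Sum>u\<in>?N. ?P u * real_of_int (u i))
                 + (\<Sum>u\<in>?N. ?P u * (real_of_int (u i))\<^sup>2)"
        unfolding E_def by (simp add: sum_distrib_left sum.distrib[symmetric] power2_eq_square algebra_simps)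
      have sq: "(\<Sum>u\<in>?N. ?P u * (real_of_int (u i))\<^sup>2) \<le> 1"
      proof -
        have "(\<Sum>u\<in>?N. ?P u * (real_of_int (u i))\<^sup>2) \<le> (\<Sum>u\<in>?N. ?P u)"
          by (rule sum_mono) (use uN pnn[OF nS] in auto)
        thus ?thesis using psum[OF nS] by simp
      qed
      show "v i * E i \<le> v i - 2 * \<mu>s * real_of_int (n i)"
      proof (cases "n i = 0")
        case True
        hence "E i \<le> 1" using Eeq sq by simp
        thus ?thesis using True vnn iM by (simp add: mult_left_le)
      next
        case False
        hence "i \<in> Iset M n" using nS iM unfolding St_def Iset_def by force
        hence dl: "(\<Sum>u\<in>?N. ?P u * real_of_int (u i)) \<le> drift_i M c p i"
          using dle[OF iM nS] sum_ui[OF uN fin_Nb, of ?P] unfolding splus_def sminus_def by simp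
        have ni: "real_of_int (n i) \<ge> 0" using nS iM unfolding St_def by auto
        have "E i \<le> 2 * real_of_int (n i) * drift_i M c p i + 1"
          using Eeq sq mult_left_mono[OF dl, of "2 * real_of_int (n i)"] ni by linarith
        hence "v i * E i \<le> v i * (2 * real_of_int (n i) * drift_i M c p i + 1)"
          using vnn iM by (simp add: mult_left_mono)
        also have "\<dots> = v i - 2 * \<mu>s * real_of_int (n i)"
          using dneg[OF iM] unfolding assms(11) by (simp add: field_simps)
        finally show ?thesis .
      qed
    qed
    also have "\<dots> = (\<Sum>i<M. v i) - 2 * (\<Sum>i<M. \<mu>s * real_of_int (n i))"
      by (simp add: sum_subtractf sum_distrib_left mult.assoc)
    finally have L: "(\<Sum>u\<in>?N. ?P u * V (n + u)) - V n \<le> (\<Sum>i<M. v i) - 2 * (\<Sum>i<M. \<mu>s * real_of_int (n i))" .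
    define T where "T = (\<Sum>i<M. \<mu>s * real_of_int (n i))"
    have nnn: "\<And>i. i < M \<Longrightarrow> real_of_int (n i) \<ge> 0" using nS unfolding St_def by auto
    have T0: "T \<ge> 0" unfolding T_def using nnn musp by (auto intro!: sum_nonneg)
    have muT: "mu n \<le> \<mu>0 + T" unfolding assms(9) T_def
      using musi nnn by (auto intro!: sum_mono mult_right_mono)
    have key: "b - T \<le> b * indicator B n"
    proof (cases "n \<in> B")
      case True thus ?thesis using T0 by simp
    next
      case False
      then obtain i where iM: "i < M" and gt: "real_of_int (n i) > b / \<mu>s"
        using nS unfolding assms(14) assms(13) by auto
      have "b < \<mu>s * real_of_int (n i)" using gt musp by (simp add: field_simps)
      also have "\<dots> \<le> T" unfolding T_def
        by (rule member_le_sum) (use iM nnn musp in auto)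
      finally show ?thesis using False by simp
    qed
    show ?thesis using L muT key unfolding T_def[symmetric] assms(13) by linarith
  qed
  show ?thesis using vnn Vnn finB drift by blast
qed

end
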